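(* Let $Z$ be a nonempty compact metric space. Then there exists a dynamical system $(X,T)$ which is transitive compact but not totally transitive, such that the set $M$ of all minimal points of $(X,T)$ is homeomorphic to $Z$, every minimal point of $(X,T)$ is a fixed point, and $M=\omega_{\mathcal{N}_T}(x)$ for some $x\in X$.
   Context: A dynamical system $(X,T)$: $X$ is a compact metric space with more than one point and without isolated points, $T:X\to X$ a continuous surjection. A point is minimal if it lies in a minimal subset, i.e. a nonempty closed set $K$ with $TK=K$ containing no nonempty closed proper subset $K'$ with $TK'\subset K'$. "Opene" means open and nonempty. $N_T(U,V)=\{n\in\mathbb{Z}_+:U\cap T^{-n}V\neq\varnothing\}$. $(X,T)$ is transitive if $N_T(U,V)\neq\varnothing$ for all opene $U,V$; totally transitive if $(X,T^k)$ is transitive for all $k\in\mathbb{N}$. $\mathcal{N}_T$ is the family of all subsets of $\mathbb{Z}_+$ containing some $N_T(U,V)$ with $U,V$ opene; $\omega_{\mathcal{N}_T}(x)=\bigcap_{F\in\mathcal{N}_T}\overline{\{T^ix:i\in F\}}$; $(X,T)$ is transitive compact if $\omega_{\mathcal{N}_T}(x)\neq\varnothing$ for all $x$. *)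

theory Defs
  imports "HOL-Analysis.Analysis"
begin

definition dynsys :: "'a::metric_space set \<Rightarrow> ('a \<Rightarrow> 'a) \<Rightarrow> bool" where
  "dynsys X T \<longleftrightarrow> compact X \<and> (\<exists>x\<in>X. \<exists>y\<in>X. x \<noteq> y) \<and> (\<forall>x\<in>X. x islimpt X)
     \<and> continuous_on X T \<and> T ` X = X"

definition opene :: "'a::topological_space set \<Rightarrow> 'a set \<Rightarrow> bool" where
  "opene X U \<longleftrightarrow> openin (top_of_set X) U \<and> U \<noteq> {}"

definition hitting_times :: "('a \<Rightarrow> 'a) \<Rightarrow> 'a set \<Rightarrow> 'a set \<Rightarrow> nat set" where
  "hitting_times T U V = {n. U \<inter> ((T ^^ n) -` V) \<noteq> {}}"

definition transitive_sys :: "'a::topological_space set \<Rightarrow> ('a \<Rightarrow> 'a) \<Rightarrow> bool" where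
  "transitive_sys X T \<longleftrightarrow> (\<forall>U V. opene X U \<and> opene X V \<longrightarrow> hitting_times T U V \<noteq> {})"

definition totally_transitive :: "'a::topological_space set \<Rightarrow> ('a \<Rightarrow> 'a) \<Rightarrow> bool" where
  "totally_transitive X T \<longleftrightarrow> (\<forall>k::nat. k \<ge> 1 \<longrightarrow> transitive_sys X (T ^^ k))"

definition hitting_family :: "'a::topological_space set \<Rightarrow> ('a \<Rightarrow> 'a) \<Rightarrow> nat set set" where
  "hitting_family X T = {F. \<exists>U V. opene X U \<and> opene X V \<and> hitting_times T U V \<subseteq> F}"

definition omega_N :: "'a::topological_space set \<Rightarrow> ('a \<Rightarrow> 'a) \<Rightarrow> 'a \<Rightarrow> 'a set" where
  "omega_N X T x = (\<Inter>F\<in>hitting_family X T. closure {(T ^^ i) x | i. i \<in> F})"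

definition transitive_compact :: "'a::topological_space set \<Rightarrow> ('a \<Rightarrow> 'a) \<Rightarrow> bool" where
  "transitive_compact X T \<longleftrightarrow> (\<forall>x\<in>X. omega_N X T x \<noteq> {})"

definition minimal_set :: "'a::topological_space set \<Rightarrow> ('a \<Rightarrow> 'a) \<Rightarrow> 'a set \<Rightarrow> bool" where
  "minimal_set X T K \<longleftrightarrow> K \<noteq> {} \<and> K \<subseteq> X \<and> closed K \<and> T ` K = K \<and>
     \<not> (\<exists>K'. K' \<noteq> {} \<and> closed K' \<and> K' \<subset> K \<and> T ` K' \<subseteq> K')"

definition minimal_points :: "'a::topological_space set \<Rightarrow> ('a \<Rightarrow> 'a) \<Rightarrow> 'a set" where
  "minimal_points X T = {x. \<exists>K. minimal_set X T K \<and> x \<in> K}"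

end

theory Submission
  imports Defs "HOL-Library.Nat_Bijection"
begin
lemma tendsto_fun_iff:
  fixes f :: "'b \<Rightarrow> (nat \<Rightarrow> real)"
  shows "(f \<longlongrightarrow> l) F \<longleftrightarrow> (\<forall>i. ((\<lambda>c. f c i) \<longlongrightarrow> l i) F)"
proof -
  have "(f \<longlongrightarrow> l) F \<longleftrightarrow> limitin (product_topology (\<lambda>i. euclidean) UNIV) f l F"
    by (simp add: euclidean_product_topology)
  also have "\<dots> \<longleftrightarrow> (\<forall>i. ((\<lambda>c. f c i) \<longlongrightarrow> l i) F)"
    by (subst limitin_componentwise) simp
  finally show ?thesis .
qed

lemma dense_seq_compact:
  fixes Z :: "'a::metric_space set"
  assumes "compact Z" "Z \<noteq> {}"
  shows "\<exists>d::nat \<Rightarrow> 'a. range d \<subseteq> Z \<and> (\<forall>z\<in>Z. \<forall>e>0. \<exists>n. dist z (d n) < e)"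
proof -
  have tb: "\<forall>\<epsilon>>0. \<exists>k. finite k \<and> k \<subseteq> Z \<and> Z \<subseteq> (\<Union>x\<in>k. ball x \<epsilon>)"
    using seq_compact_imp_totally_bounded compact_imp_seq_compact assms(1) by blast
  have "\<forall>n::nat. \<exists>k. finite k \<and> k \<subseteq> Z \<and> Z \<subseteq> (\<Union>x\<in>k. ball x (1 / (Suc n)))"
  proof
    fix n :: nat
    have "(0::real) < 1 / Suc n" by simp
    then show "\<exists>k. finite k \<and> k \<subseteq> Z \<and> Z \<subseteq> (\<Union>x\<in>k. ball x (1 / (Suc n)))" using tb by blast
  qed
  then obtain K where K: "\<And>n::nat. finite (K n) \<and> K n \<subseteq> Z \<and> Z \<subseteq> (\<Union>x\<in>K n. ball x (1 / (Suc n)))"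
    by metis
  define D where "D = (\<Union>n. K n)"
  have cD: "countable D" unfolding D_def using K by (simp add: countable_finite)
  have DZ: "D \<subseteq> Z" unfolding D_def using K by blast
  have "D \<noteq> {}" using K[of 0] assms(2) unfolding D_def by blast
  define d where "d = from_nat_into D"
  have rd: "range d = D" unfolding d_def using cD \<open>D \<noteq> {}\<close> by (simp add: range_from_nat_into)
  have "\<exists>n. dist z (d n) < e" if zZ: "z \<in> Z" and ep: "e > 0" for z e
  proof -
    obtain n::nat where n: "1 / Suc n < e" using \<open>e>0\<close>
      by (rule nat_approx_posE)
    then obtain x where "x \<in> K n" "z \<in> ball x (1 / Suc n)" using K[of n] zZ by blast
    then have "x \<in> D" "dist z x < e" unfolding D_def using n by (auto simp: dist_commute)
    then show ?thesis using rd by (metis rangeE)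
  qed
  then show ?thesis using rd DZ by blast
qed

lemma embed_compact:
  fixes Z :: "'a::metric_space set"
  assumes "compact Z" "Z \<noteq> {}"
  shows "\<exists>(Z'::(nat \<Rightarrow> real) set) (q::nat \<Rightarrow> nat \<Rightarrow> real). compact Z' \<and> Z' homeomorphic Z \<and> range q \<subseteq> Z' \<and> Z' \<subseteq> closure (range q)"
proof -
  obtain d :: "nat \<Rightarrow> 'a" where d: "range d \<subseteq> Z" "\<And>z e. z \<in> Z \<Longrightarrow> e > 0 \<Longrightarrow> \<exists>n. dist z (d n) < e"
    using dense_seq_compact[OF assms] by blast
  define h where "h = (\<lambda>z. \<lambda>n. dist z (d n))"
  have ch: "continuous_on S h" for S
    unfolding h_def by (rule continuous_on_coordinatewise_then_product) (rule continuous_on_dist[OF continuous_on_id continuous_on_const])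
  have inj: "inj_on h Z"
  proof
    fix z w assume zw: "z \<in> Z" "w \<in> Z" "h z = h w"
    have lt: "dist z w < e" if "e > 0" for e
    proof -
      obtain n where n: "dist z (d n) < e/2" using d(2)[OF zw(1), of "e/2"] \<open>e>0\<close> by auto
      have "dist w (d n) = dist z (d n)" using fun_cong[OF zw(3), of n] unfolding h_def by simp
      moreover have "dist z w \<le> dist z (d n) + dist w (d n)" using dist_triangle2 by blast
      ultimately show ?thesis using n by linarith
    qed
    show "z = w"
    proof (rule ccontr)
      assume "z \<noteq> w"
      then have "dist z w > 0" by simp
      then show False using lt[of "dist z w"] by simp
    qed
  qed
  define Z' where "Z' = h ` Z"
  have "Z homeomorphic Z'" unfolding Z'_def
    using homeomorphic_compact[OF assms(1) ch refl inj] .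
  then have f1: "Z' homeomorphic Z" using homeomorphic_sym by auto
  moreover have "compact Z'" unfolding Z'_def using compact_continuous_image[OF ch assms(1)] .
  moreover have "range (h \<circ> d) \<subseteq> Z'" using d(1) unfolding Z'_def by auto
  moreover have "Z' \<subseteq> closure (range (h \<circ> d))"
  proof -
    have "Z \<subseteq> closure (range d)"
    proof
      fix z assume "z \<in> Z"
      show "z \<in> closure (range d)" unfolding closure_approachable
      proof (intro allI impI)
        fix e :: real assume "e > 0"
        then obtain n where "dist z (d n) < e" using d(2)[OF \<open>z\<in>Z\<close>] by blast
        then show "\<exists>x'\<in>range d. dist x' z < e" by (auto simp: dist_commute)
      qed
    qed
    then have "h ` Z \<subseteq> h ` closure (range d)" by blast
    also have "\<dots> \<subseteq> closure (h ` range d)"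
      by (rule image_closure_subset[OF ch closed_closure closure_subset])
    finally show ?thesis unfolding Z'_def by (simp add: image_comp)
  qed
  ultimately have "compact Z' \<and> Z' homeomorphic Z \<and> range (h \<circ> d) \<subseteq> Z' \<and> Z' \<subseteq> closure (range (h \<circ> d))"
    by (intro conjI)
  then show ?thesis by (rule_tac x=Z' in exI, rule_tac x="h \<circ> d" in exI)
qed

definition bb :: "(nat \<Rightarrow> real) \<Rightarrow> nat \<Rightarrow> real" where
  "bb x j = x (prod_encode (j, 0))"
definition zz :: "(nat \<Rightarrow> real) \<Rightarrow> nat \<Rightarrow> nat \<Rightarrow> real" where
  "zz x j = (\<lambda>k. x (prod_encode (j, Suc k)))"
definition mk :: "(nat \<Rightarrow> real) \<Rightarrow> (nat \<Rightarrow> nat \<Rightarrow> real) \<Rightarrow> nat \<Rightarrow> real" where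
  "mk b z = (\<lambda>n. case prod_decode n of (j, k) \<Rightarrow> (case k of 0 \<Rightarrow> b j | Suc k' \<Rightarrow> z j k'))"

lemma bb_mk [simp]: "bb (mk b z) j = b j" by (simp add: bb_def mk_def)
lemma zz_mk [simp]: "zz (mk b z) j = z j" by (simp add: zz_def mk_def)

lemma mk_bb_zz: "mk (bb x) (zz x) = x"
proof
  fix n
  obtain j k where n: "prod_decode n = (j, k)" by (cases "prod_decode n")
  then have n': "n = prod_encode (j, k)" by (metis prod_decode_inverse)
  show "mk (bb x) (zz x) n = x n"
    using n n' by (cases k) (auto simp: mk_def bb_def zz_def)
qed

lemma ext_bz: "(\<And>j. bb x j = bb y j) \<Longrightarrow> (\<And>j. zz x j = zz y j) \<Longrightarrow> x = y"
  by (metis mk_bb_zz ext)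

definition sh :: "nat \<Rightarrow> nat \<Rightarrow> nat" where
  "sh m n = prod_encode (fst (prod_decode n) + m, snd (prod_decode n))"

definition TT :: "(nat \<Rightarrow> real) \<Rightarrow> (nat \<Rightarrow> real)" where
  "TT x = (\<lambda>n. x (sh 1 n))"

lemma TT_pow: "(TT ^^ m) x = (\<lambda>n. x (sh m n))"
proof (induction m)
  case 0
  then show ?case by (simp add: sh_def)
next
  case (Suc m)
  have "(TT ^^ Suc m) x = TT ((TT ^^ m) x)" by simp
  also have "\<dots> = (\<lambda>n. x (sh m (sh 1 n)))" by (simp add: Suc TT_def)
  also have "\<dots> = (\<lambda>n. x (sh (Suc m) n))" by (simp add: sh_def)
  finally show ?case .
qed

lemma bb_pow [simp]: "bb ((TT ^^ m) x) j = bb x (j + m)"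
  by (simp add: TT_pow bb_def sh_def)
lemma zz_pow [simp]: "zz ((TT ^^ m) x) j = zz x (j + m)"
  by (simp add: TT_pow zz_def sh_def)
lemma bb_TT [simp]: "bb (TT x) j = bb x (Suc j)"
  using bb_pow[of 1 x j] by simp
lemma zz_TT [simp]: "zz (TT x) j = zz x (Suc j)"
  using zz_pow[of 1 x j] by simp

lemma cont_pow: "continuous_on S (TT ^^ m)"
proof -
  have "(TT ^^ m) = (\<lambda>x. \<lambda>n. x (sh m n))" using TT_pow by blast
  moreover have "continuous_on S (\<lambda>x::nat\<Rightarrow>real. \<lambda>n. x (sh m n))"
    by (rule continuous_on_coordinatewise_then_product)
       (rule continuous_on_subset[OF continuous_on_product_coordinates], simp)
  ultimately show ?thesis by simp
qed

lemma cont_TT: "continuous_on S TT"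
  using cont_pow[of S 1] by simp

lemma cont_bb: "continuous_on S (\<lambda>x. bb x j)"
  unfolding bb_def by (rule continuous_on_subset[OF continuous_on_product_coordinates], simp)

lemma cont_zz: "continuous_on S (\<lambda>x. zz x j)"
  unfolding zz_def
  by (rule continuous_on_coordinatewise_then_product)
     (rule continuous_on_subset[OF continuous_on_product_coordinates], simp)

definition XX :: "(nat \<Rightarrow> real) set \<Rightarrow> (nat \<Rightarrow> real) set" where
  "XX Z' = {x. (\<forall>j. bb x j = 0 \<or> bb x j = 1) \<and> (\<forall>j. zz x j \<in> Z') \<and>
     (\<forall>j. bb x j = 1 \<or> zz x (Suc j) = zz x j) \<and>
     (\<forall>i j. i < j \<longrightarrow> bb x i = 0 \<or> bb x j = 0 \<or> even (j - i)) \<and>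
     (\<forall>i j k. i < j \<longrightarrow> j < k \<longrightarrow> bb x i = 0 \<or> bb x j = 0 \<or> bb x k = 0 \<or>
         2*(j-i) \<le> k-j \<or> 2*(k-j) \<le> j-i)}"

lemma closed_XX:
  assumes "closed Z'"
  shows "closed (XX Z')"
proof -
  have c1: "closed {x. bb x j = c}" for j c
    by (rule closed_Collect_eq[OF cont_bb continuous_on_const])
  have c2: "closed {x. zz x j \<in> Z'}" for j
    using closed_vimage[OF assms cont_zz[of UNIV j]] by (simp add: vimage_def)
  have c3: "closed {x. zz x (Suc j) = zz x j}" for j
    by (rule closed_Collect_eq[OF cont_zz cont_zz])
  show ?thesis unfolding XX_def
    by (intro closed_Collect_conj closed_Collect_all closed_Collect_imp closed_Collect_disj
         c1 c2 c3 closed_Collect_const open_Collect_const)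
qed

lemma compact_XX:
  assumes "compact Z'"
  shows "compact (XX Z')"
proof -
  define B where "B n = (case prod_decode n of (j, k) \<Rightarrow> (case k of 0 \<Rightarrow> {0,1} | Suc k' \<Rightarrow> (\<lambda>z. z k') ` Z'))" for n
  have cB: "compact (B n)" for n
  proof -
    obtain j k where n: "prod_decode n = (j, k)" by (cases "prod_decode n")
    show ?thesis
    proof (cases k)
      case 0 then show ?thesis using n by (simp add: B_def)
    next
      case (Suc k')
      have "compact ((\<lambda>z::nat\<Rightarrow>real. z k') ` Z')"
        by (rule compact_continuous_image[OF continuous_on_subset[OF continuous_on_product_coordinates] assms]) simp
      then show ?thesis using n Suc by (simp add: B_def)
    qed
  qed
  have "compactin (product_topology (\<lambda>i. euclidean) UNIV) (PiE UNIV B)"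
    using cB by (simp add: compactin_PiE)
  then have cP: "compact (PiE UNIV B)"
    by (simp add: euclidean_product_topology)
  have sub: "XX Z' \<subseteq> PiE UNIV B"
  proof
    fix x assume x: "x \<in> XX Z'"
    have "x n \<in> B n" for n
    proof -
      obtain j k where n: "prod_decode n = (j, k)" by (cases "prod_decode n")
      then have n': "n = prod_encode (j, k)" by (metis prod_decode_inverse)
      show ?thesis
      proof (cases k)
        case 0
        then show ?thesis using x n n' unfolding XX_def B_def bb_def by auto
      next
        case (Suc k')
        have "zz x j \<in> Z'" using x unfolding XX_def by blast
        then show ?thesis using n n' Suc unfolding B_def zz_def by auto
      qed
    qed
    then show "x \<in> PiE UNIV B" by (simp add: PiE_UNIV_domain)
  qed
  have "XX Z' = PiE UNIV B \<inter> XX Z'" using sub by blast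
  then show ?thesis using compact_Int_closed[OF cP closed_XX[OF compact_imp_closed[OF assms]]] by simp
qed

lemma coord_eq:
  assumes "bb y (fst (prod_decode n)) = bb x (fst (prod_decode n))"
      and "zz y (fst (prod_decode n)) = zz x (fst (prod_decode n))"
  shows "y n = x n"
proof -
  obtain j k where n: "prod_decode n = (j, k)" by (cases "prod_decode n")
  then have n': "n = prod_encode (j, k)" by (metis prod_decode_inverse)
  show ?thesis
  proof (cases k)
    case 0 then show ?thesis using assms n n' by (simp add: bb_def)
  next
    case (Suc k')
    have "zz y j k' = zz x j k'" using assms n by simp
    then show ?thesis using n' Suc by (simp add: zz_def)
  qed
qed

lemma open_nbhd:
  assumes "open W" "x \<in> W"
  shows "\<exists>K. \<forall>y. (\<forall>j<K. bb y j = bb x j \<and> zz y j = zz x j) \<longrightarrow> y \<in> W"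
proof -
  have "openin (product_topology (\<lambda>i. euclidean) UNIV) W"
    using assms(1) by (simp add: open_fun_def)
  from product_topology_open_contains_basis[OF this assms(2)]
  obtain Xb :: "nat \<Rightarrow> real set" where Xb: "x \<in> PiE UNIV Xb" "\<And>i. openin euclidean (Xb i)"
      "finite {i. Xb i \<noteq> topspace euclidean}" "PiE UNIV Xb \<subseteq> W"
    by blast
  define F where "F = {i. Xb i \<noteq> UNIV}"
  have fF: "finite F" using Xb(3) unfolding F_def by simp
  define K where "K = Suc (Max (insert 0 F))"
  have FK: "n < K" if "n \<in> F" for n
    using fF that unfolding K_def by (simp add: le_imp_less_Suc)
  show ?thesis
  proof (intro exI allI impI)
    fix y assume agree: "\<forall>j<K. bb y j = bb x j \<and> zz y j = zz x j"
    have "y n \<in> Xb n" for n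
    proof (cases "n \<in> F")
      case True
      have "fst (prod_decode n) \<le> n"
        by (metis le_prod_encode_1 prod_decode_inverse prod.collapse)
      then have "fst (prod_decode n) < K" using FK[OF True] by simp
      then have "y n = x n" using agree coord_eq by blast
      then show ?thesis using Xb(1) by (auto simp: PiE_UNIV_domain)
    next
      case False then show ?thesis unfolding F_def by simp
    qed
    then have "y \<in> PiE UNIV Xb" by (simp add: PiE_UNIV_domain)
    then show "y \<in> W" using Xb(4) by blast
  qed
qed

locale SZ =
  fixes Z' :: "(nat \<Rightarrow> real) set"
  assumes cZ: "compact Z'" and neZ: "Z' \<noteq> {}"
begin

abbreviation "X \<equiv> XX Z'"

lemma X_b01: "x \<in> X \<Longrightarrow> bb x j = 0 \<or> bb x j = 1" unfolding XX_def by blast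
lemma X_z: "x \<in> X \<Longrightarrow> zz x j \<in> Z'" unfolding XX_def by blast
lemma X_chg: "x \<in> X \<Longrightarrow> bb x j \<noteq> 1 \<Longrightarrow> zz x (Suc j) = zz x j" unfolding XX_def by blast
lemma X_par: "x \<in> X \<Longrightarrow> bb x i = 1 \<Longrightarrow> bb x j = 1 \<Longrightarrow> even (i + j)"
proof -
  assume x: "x \<in> X" and i: "bb x i = 1" and j: "bb x j = 1"
  have A: "\<forall>i j. i < j \<longrightarrow> bb x i = 0 \<or> bb x j = 0 \<or> even (j - i)" using x unfolding XX_def by blast
  show "even (i + j)"
  proof (cases i j rule: linorder_cases)
    case less then have "even (j - i)" using A i j by fastforce
    then show ?thesis using less by presburger
  next
    case equal then show ?thesis by simp
  next
    case greater then have "even (i - j)" using A i j by fastforce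
    then show ?thesis using greater by presburger
  qed
qed
lemma X_tri:
  assumes "x \<in> X" "i < j" "j < k" "bb x i = 1" "bb x j = 1" "bb x k = 1"
  shows "2*(j-i) \<le> k-j \<or> 2*(k-j) \<le> j-i"
proof -
  have A: "\<forall>i j k. i < j \<longrightarrow> j < k \<longrightarrow> bb x i = 0 \<or> bb x j = 0 \<or> bb x k = 0 \<or>
         2*(j-i) \<le> k-j \<or> 2*(k-j) \<le> j-i" using assms(1) unfolding XX_def by blast
  then have "bb x i = 0 \<or> bb x j = 0 \<or> bb x k = 0 \<or> 2*(j-i) \<le> k-j \<or> 2*(k-j) \<le> j-i"
    using assms(2,3) by blast
  then show ?thesis using assms(4-6) by simp
qed

lemma X_intro:
  assumes "\<And>j. bb x j = 0 \<or> bb x j = 1" "\<And>j. zz x j \<in> Z'"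
    "\<And>j. bb x j \<noteq> 1 \<Longrightarrow> zz x (Suc j) = zz x j"
    "\<And>i j. bb x i = 1 \<Longrightarrow> bb x j = 1 \<Longrightarrow> even (i + j)"
    "\<And>i j k. i < j \<Longrightarrow> j < k \<Longrightarrow> bb x i = 1 \<Longrightarrow> bb x j = 1 \<Longrightarrow> bb x k = 1 \<Longrightarrow>
       2*(j-i) \<le> k-j \<or> 2*(k-j) \<le> j-i"
  shows "x \<in> X"
proof -
  have "\<forall>i j. i < j \<longrightarrow> bb x i = 0 \<or> bb x j = 0 \<or> even (j - i)"
  proof (intro allI impI)
    fix i j :: nat assume "i < j"
    show "bb x i = 0 \<or> bb x j = 0 \<or> even (j - i)"
    proof (cases "bb x i = 1 \<and> bb x j = 1")
      case True
      then have "even (i + j)" using assms(4) by blast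
      then have "even (j - i)" using \<open>i<j\<close> by presburger
      then show ?thesis by simp
    next
      case False then show ?thesis using assms(1)[of i] assms(1)[of j] by auto
    qed
  qed
  moreover have "\<forall>i j k. i < j \<longrightarrow> j < k \<longrightarrow> bb x i = 0 \<or> bb x j = 0 \<or> bb x k = 0 \<or>
         2*(j-i) \<le> k-j \<or> 2*(k-j) \<le> j-i"
  proof (intro allI impI)
    fix i j k :: nat assume ij: "i < j" "j < k"
    show "bb x i = 0 \<or> bb x j = 0 \<or> bb x k = 0 \<or> 2*(j-i) \<le> k-j \<or> 2*(k-j) \<le> j-i"
    proof (cases "bb x i = 1 \<and> bb x j = 1 \<and> bb x k = 1")
      case True then show ?thesis using assms(5)[OF ij] by blast
    next
      case False then show ?thesis using assms(1)[of i] assms(1)[of j] assms(1)[of k] by auto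
    qed
  qed
  moreover have "\<forall>j. bb x j = 1 \<or> zz x (Suc j) = zz x j" using assms(3) by blast
  ultimately show ?thesis unfolding XX_def using assms(1,2) by blast
qed

lemma TT_X: "x \<in> X \<Longrightarrow> TT x \<in> X"
proof (rule X_intro)
  assume x: "x \<in> X"
  show "bb (TT x) j = 0 \<or> bb (TT x) j = 1" for j using X_b01[OF x] by simp
  show "zz (TT x) j \<in> Z'" for j using X_z[OF x] by simp
  show "bb (TT x) j \<noteq> 1 \<Longrightarrow> zz (TT x) (Suc j) = zz (TT x) j" for j using X_chg[OF x] by simp
  show "bb (TT x) i = 1 \<Longrightarrow> bb (TT x) j = 1 \<Longrightarrow> even (i + j)" for i j
    using X_par[OF x, of "Suc i" "Suc j"] by simp
  show "2*(j-i) \<le> k-j \<or> 2*(k-j) \<le> j-i"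
    if "i < j" "j < k" "bb (TT x) i = 1" "bb (TT x) j = 1" "bb (TT x) k = 1" for i j k
    using X_tri[OF x, of "Suc i" "Suc j" "Suc k"] that by simp
qed

lemma TT_pow_X: "x \<in> X \<Longrightarrow> (TT ^^ n) x \<in> X"
  by (induction n) (auto simp: TT_X)

lemma TT_surj: "TT ` X = X"
proof
  show "TT ` X \<subseteq> X" using TT_X by blast
  show "X \<subseteq> TT ` X"
  proof
    fix y assume y: "y \<in> X"
    define x where "x = mk (\<lambda>j. if j = 0 then 0 else bb y (j - 1)) (\<lambda>j. if j = 0 then zz y 0 else zz y (j - 1))"
    have "TT x = y" by (rule ext_bz) (simp_all add: x_def)
    moreover have "x \<in> X"
    proof (rule X_intro)
      show "bb x j = 0 \<or> bb x j = 1" for j using X_b01[OF y] by (simp add: x_def)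
      show "zz x j \<in> Z'" for j using X_z[OF y] by (simp add: x_def)
      show "bb x j \<noteq> 1 \<Longrightarrow> zz x (Suc j) = zz x j" for j using X_chg[OF y, of "j - 1"]
        by (cases j) (simp_all add: x_def)
      show "bb x i = 1 \<Longrightarrow> bb x j = 1 \<Longrightarrow> even (i + j)" for i j
        using X_par[OF y, of "i - 1" "j - 1"] by (simp add: x_def split: if_splits)
      show "2*(j-i) \<le> k-j \<or> 2*(k-j) \<le> j-i"
        if "i < j" "j < k" "bb x i = 1" "bb x j = 1" "bb x k = 1" for i j k
      proof -
        have "i > 0" using that(3) by (auto simp: x_def split: if_splits)
        then show ?thesis using X_tri[OF y, of "i - 1" "j - 1" "k - 1"] that by (simp add: x_def)
      qed
    qed
    ultimately show "y \<in> TT ` X" by blast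
  qed
qed

end

definition glue :: "(nat\<Rightarrow>real) \<Rightarrow> nat \<Rightarrow> nat \<Rightarrow> nat \<Rightarrow> (nat\<Rightarrow>real) \<Rightarrow> (nat\<Rightarrow>real)" where
  "glue x N c n w = mk
    (\<lambda>j. if j < N then bb x j else if j = c then 1 else if n \<le> j \<and> j < n + N then bb w (j - n) else 0)
    (\<lambda>j. if j < N then zz x j else if j \<le> c then zz x (N - 1) else if j < n then zz w 0
         else if j < n + N then zz w (j - n) else zz w (N - 1))"

lemma glue_pre: "j < N \<Longrightarrow> bb (glue x N c n w) j = bb x j \<and> zz (glue x N c n w) j = zz x j"
  by (simp add: glue_def)

lemma glue_post: "N \<le> c \<Longrightarrow> c < n \<Longrightarrow> j < N \<Longrightarrow>
    bb (glue x N c n w) (n + j) = bb w j \<and> zz (glue x N c n w) (n + j) = zz w j"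
  by (simp add: glue_def)

context SZ
begin

lemma glue_X:
  assumes x: "x \<in> X" and w: "w \<in> X" and N: "0 < N" "3*N \<le> c" "3*(c+N) \<le> n"
    and px: "\<And>j. j < N \<Longrightarrow> bb x j = 1 \<Longrightarrow> even (c + j)"
    and pw: "\<And>j. j < N \<Longrightarrow> bb w j = 1 \<Longrightarrow> even (n + j + c)"
  shows "glue x N c n w \<in> X"
proof (rule X_intro)
  let ?y = "glue x N c n w"
  have bm: "bb ?y j = 1 \<longleftrightarrow> (j < N \<and> bb x j = 1) \<or> j = c \<or> (n \<le> j \<and> j < n+N \<and> bb w (j-n) = 1)" for j
    using N by (auto simp: glue_def)
  show "bb ?y j = 0 \<or> bb ?y j = 1" for j
    using X_b01[OF x, of j] X_b01[OF w, of "j-n"] by (auto simp: glue_def)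
  show "zz ?y j \<in> Z'" for j
    using X_z[OF x] X_z[OF w] by (auto simp: glue_def)
  show "zz ?y (Suc j) = zz ?y j" if nm: "bb ?y j \<noteq> 1" for j
  proof -
    consider "Suc j < N" | "Suc j = N" | "N \<le> j \<and> Suc j \<le> c" | "j = c" | "c < j \<and> Suc j < n"
      | "Suc j = n" | "n \<le> j \<and> Suc j < n + N" | "Suc j = n + N" | "n + N \<le> j"
      using N by linarith
    then show ?thesis
    proof cases
      case 1
      then have "bb x j \<noteq> 1" using nm by (simp add: glue_def)
      then show ?thesis using X_chg[OF x] 1 by (simp add: glue_def)
    next
      case 2
      then have "j = N - 1" by simp
      then show ?thesis using N 2 by (simp add: glue_def)
    next
      case 3 then show ?thesis using N by (simp add: glue_def)
    next
      case 4 then show ?thesis using nm N by (simp add: glue_def)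
    next
      case 5 then show ?thesis using N by (simp add: glue_def)
    next
      case 6 then show ?thesis using N nm by (auto simp: glue_def)
    next
      case 7
      then have "bb w (j - n) \<noteq> 1" using nm N by (simp add: glue_def)
      then have "zz w (Suc (j - n)) = zz w (j - n)" using X_chg[OF w] by blast
      moreover have "Suc j - n = Suc (j - n)" using 7 by (simp add: Suc_diff_le)
      ultimately show ?thesis using 7 N by (simp add: glue_def)
    next
      case 8
      then have "j - n = N - 1" by simp
      then show ?thesis using N 8 by (simp add: glue_def)
    next
      case 9 then show ?thesis using N by (simp add: glue_def)
    qed
  qed
  have reg: "m < N \<or> m = c \<or> (n \<le> m \<and> m < n + N)" if "bb ?y m = 1" for m
    using bm[of m] that by blast
  show "even (i + j)" if i: "bb ?y i = 1" and j: "bb ?y j = 1" for i j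
  proof -
    have pi: "even (c + i)" using bm[of i] i px[of i] pw[of "i - n"] by (auto; presburger)
    have pj: "even (c + j)" using bm[of j] j px[of j] pw[of "j - n"] by (auto; presburger)
    show ?thesis using pi pj by presburger
  qed
  show "2*(j-i) \<le> k-j \<or> 2*(k-j) \<le> j-i"
    if ij: "i < j" "j < k" and m: "bb ?y i = 1" "bb ?y j = 1" "bb ?y k = 1" for i j k
  proof (rule ccontr)
    assume neg: "\<not> (2*(j-i) \<le> k-j \<or> 2*(k-j) \<le> j-i)"
    then have n1: "k - j < 2*(j-i)" "j - i < 2*(k-j)" by auto
    show False
    proof (cases "k < N")
      case True
      then have "bb x i = 1" "bb x j = 1" "bb x k = 1" using m ij by (simp_all add: glue_def)
      then show False using X_tri[OF x ij] n1 by linarith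
    next
      case kN: False
      show False
      proof (cases "n \<le> i")
        case True
        have "bb w (i-n) = 1" using bm[of i] m(1) True N by auto
        moreover have "bb w (j-n) = 1" using bm[of j] m(2) True ij N by auto
        moreover have "bb w (k-n) = 1" using bm[of k] m(3) True ij N by auto
        moreover have "i - n < j - n" "j - n < k - n" using ij True by auto
        ultimately have "2*((j-n)-(i-n)) \<le> (k-n)-(j-n) \<or> 2*((k-n)-(j-n)) \<le> (j-n)-(i-n)"
          using X_tri[OF w] by blast
        then show False using n1 True ij by linarith
      next
        case iN: False
        have ri: "i < N \<or> i = c" using reg[OF m(1)] iN by auto
        have rk: "k = c \<or> (n \<le> k \<and> k < n + N)" using reg[OF m(3)] kN by auto
        have rj: "j < N \<or> j = c \<or> (n \<le> j \<and> j < n + N)" using reg[OF m(2)] .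
        have eqs: "j - i + i = j" "k - j + j = k" "3*c + 3*N \<le> n" using ij N by auto
        show False
        proof (cases "k = c")
          case True
          then have "j < N" using rj ij N by auto
          then show False using True ij n1 N eqs by linarith
        next
          case kc: False
          then have k3: "n \<le> k" "k < n + N" using rk by auto
          show False
          proof (cases "i < N")
            case i1: True
            show False
            proof (cases "j < N")
              case True then show False using i1 k3 ij n1 N eqs by linarith
            next
              case False
              then have "j = c \<or> (n \<le> j \<and> j < n + N)" using rj by auto
              then show False
              proof
                assume "j = c" then show False using i1 k3 ij n1 N eqs by linarith
              next
                assume "n \<le> j \<and> j < n + N" then show False using i1 k3 ij n1 N eqs by linarith
              qed
            qed
          next
            case False
            then have "i = c" using ri by auto
            then have "n \<le> j" "j < n + N" using rj ij N by auto
            then show False using \<open>i = c\<close> k3 ij n1 N eqs by linarith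
          qed
        qed
      qed
    qed
  qed
qed

lemma hit:
  assumes "opene X U" "opene X V"
  shows "\<exists>r n0. r < 2 \<and> (\<forall>n\<ge>n0. n mod 2 = r \<longrightarrow> n \<in> hitting_times TT U V)"
proof -
  obtain OU where OU: "open OU" "U = X \<inter> OU" using assms(1) unfolding opene_def openin_open by blast
  obtain OV where OV: "open OV" "V = X \<inter> OV" using assms(2) unfolding opene_def openin_open by blast
  obtain x where x: "x \<in> U" using assms(1) unfolding opene_def by blast
  obtain w where w: "w \<in> V" using assms(2) unfolding opene_def by blast
  have xX: "x \<in> X" and wX: "w \<in> X" using x w OU OV by auto
  obtain K1 where K1: "\<And>y. (\<forall>j<K1. bb y j = bb x j \<and> zz y j = zz x j) \<Longrightarrow> y \<in> OU"
    using open_nbhd[OF OU(1)] x OU(2) by blast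
  obtain K2 where K2: "\<And>y. (\<forall>j<K2. bb y j = bb w j \<and> zz y j = zz w j) \<Longrightarrow> y \<in> OV"
    using open_nbhd[OF OV(1)] w OV(2) by blast
  define N where "N = Suc (K1 + K2)"
  obtain c where c: "3*N \<le> c" "\<And>j. j < N \<Longrightarrow> bb x j = 1 \<Longrightarrow> even (c + j)"
  proof (cases "\<exists>j0<N. bb x j0 = 1")
    case True
    then obtain j0 where j0: "bb x j0 = 1" by blast
    define c where "c = 3*N + (3*N + j0) mod 2"
    have "even (c + j)" if "bb x j = 1" for j
    proof -
      have "even (j0 + j)" using X_par[OF xX j0 that] .
      then show ?thesis unfolding c_def by presburger
    qed
    then show ?thesis using that[of c] unfolding c_def by simp
  next
    case False
    then show ?thesis using that[of "3*N"] by auto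
  qed
  obtain r where r: "r < 2" "\<And>n j. n mod 2 = r \<Longrightarrow> j < N \<Longrightarrow> bb w j = 1 \<Longrightarrow> even (n + j + c)"
  proof (cases "\<exists>j1<N. bb w j1 = 1")
    case True
    then obtain j1 where j1: "bb w j1 = 1" by blast
    define r where "r = (j1 + c) mod 2"
    have "even (n + j + c)" if "n mod 2 = r" "bb w j = 1" for n j
    proof -
      have "even (j1 + j)" using X_par[OF wX j1 that(2)] .
      then show ?thesis using that(1) unfolding r_def by presburger
    qed
    then show ?thesis using that[of r] unfolding r_def by simp
  next
    case False
    then show ?thesis using that[of 0] by auto
  qed
  have "n \<in> hitting_times TT U V" if n: "n \<ge> 3*(c+N)" "n mod 2 = r" for n
  proof -
    define y where "y = glue x N c n w"
    have yX: "y \<in> X" unfolding y_def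
      by (rule glue_X[OF xX wX]) (use c r n N_def in auto)
    have "y \<in> OU" using K1 glue_pre unfolding y_def N_def by simp
    moreover have "(TT ^^ n) y \<in> OV"
    proof (rule K2, intro allI impI)
      fix j assume "j < K2"
      then have "j < N" unfolding N_def by simp
      then show "bb ((TT ^^ n) y) j = bb w j \<and> zz ((TT ^^ n) y) j = zz w j"
        using glue_post[of N c n j x w] c n unfolding y_def by (simp add: add.commute)
    qed
    ultimately have "y \<in> U \<inter> (TT ^^ n) -` V" using yX TT_pow_X[OF yX] OU OV by auto
    then show ?thesis unfolding hitting_times_def by blast
  qed
  then show ?thesis using r(1) by blast
qed

lemma transitive: "transitive_sys X TT"
  unfolding transitive_sys_def
proof (intro allI impI)
  fix U V assume "opene X U \<and> opene X V"
  then obtain r n0 where "r < 2" "\<And>n. n \<ge> n0 \<Longrightarrow> n mod 2 = r \<Longrightarrow> n \<in> hitting_times TT U V"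
    using hit by blast
  then have "2*n0 + r \<in> hitting_times TT U V" by simp
  then show "hitting_times TT U V \<noteq> {}" by blast
qed

lemma point_mark:
  assumes "z0 \<in> Z'"
  shows "mk (\<lambda>j. if j = p then 1 else 0) (\<lambda>_. z0) \<in> X"
  by (rule X_intro) (use assms in \<open>auto split: if_splits\<close>)

lemma not_tt: "\<not> totally_transitive X TT"
proof
  assume tt: "totally_transitive X TT"
  obtain z0 where z0: "z0 \<in> Z'" using neZ by blast
  define U where "U = X \<inter> {y. y (prod_encode (0,0)) > 1/2}"
  define V where "V = X \<inter> {y. y (prod_encode (1,0)) > 1/2}"
  have o1: "open {y::nat\<Rightarrow>real. y (prod_encode (a,0)) > 1/2}" for a
    by (rule open_Collect_less[OF continuous_on_const continuous_on_product_coordinates])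
  have "mk (\<lambda>j. if j = 0 then 1 else 0) (\<lambda>_. z0) \<in> U"
    using point_mark[OF z0, of 0] unfolding U_def by (simp add: bb_def[symmetric])
  then have oU: "opene X U" unfolding opene_def U_def using o1 by blast
  have "mk (\<lambda>j. if j = 1 then 1 else 0) (\<lambda>_. z0) \<in> V"
    using point_mark[OF z0, of 1] unfolding V_def by (simp add: bb_def[symmetric])
  then have oV: "opene X V" unfolding opene_def V_def using o1 by blast
  have "transitive_sys X (TT ^^ 2)" using tt unfolding totally_transitive_def by simp
  then have "hitting_times (TT ^^ 2) U V \<noteq> {}" using oU oV unfolding transitive_sys_def by blast
  then obtain n y where y: "y \<in> U" "((TT ^^ 2) ^^ n) y \<in> V" unfolding hitting_times_def by blast
  have yX: "y \<in> X" using y(1) unfolding U_def by blast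
  have "bb y 0 = 1" using y(1) X_b01[OF yX, of 0] unfolding U_def bb_def by auto
  moreover have "bb y (1 + 2*n) = 1"
  proof -
    have "((TT ^^ 2) ^^ n) y = (TT ^^ (2*n)) y" by (simp add: funpow_mult)
    then have "bb ((TT ^^ (2*n)) y) 1 > 1/2" using y(2) unfolding V_def bb_def by auto
    then show ?thesis using X_b01[OF yX, of "1 + 2*n"] by auto
  qed
  ultimately have "even (0 + (1 + 2*n))" using X_par[OF yX] by blast
  then show False by simp
qed

end

definition ee :: "(nat \<Rightarrow> real) \<Rightarrow> (nat \<Rightarrow> real)" where
  "ee z = mk (\<lambda>_. 0) (\<lambda>_. z)"

lemma bb_ee [simp]: "bb (ee z) j = 0" by (simp add: ee_def)
lemma zz_ee [simp]: "zz (ee z) j = z" by (simp add: ee_def)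
lemma TT_ee: "TT (ee z) = ee z" by (rule ext_bz) simp_all
lemma TT_pow_ee: "(TT ^^ n) (ee z) = ee z" by (rule ext_bz) simp_all

lemma cont_ee: "continuous_on S ee"
proof (rule continuous_on_coordinatewise_then_product)
  fix n
  obtain j k where n: "prod_decode n = (j, k)" by (cases "prod_decode n")
  show "continuous_on S (\<lambda>z. ee z n)"
  proof (cases k)
    case 0
    then show ?thesis using n by (simp add: ee_def mk_def)
  next
    case (Suc k')
    then have eq: "(\<lambda>z. ee z n) = (\<lambda>z. z k')" using n by (simp add: ee_def mk_def)
    show ?thesis unfolding eq by (rule continuous_on_subset[OF continuous_on_product_coordinates]) simp
  qed
qed

lemma inj_ee: "inj ee"
  by (rule injI) (metis zz_ee)

context SZ
begin

lemma ee_X: "z \<in> Z' \<Longrightarrow> ee z \<in> X"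
  by (rule X_intro) simp_all

lemma unmarked:
  assumes x: "x \<in> X" and nm: "\<And>j. bb x j \<noteq> 1"
  shows "x = ee (zz x 0)"
proof -
  have zj: "zz x j = zz x 0" for j
  proof (induction j)
    case 0 show ?case by simp
  next
    case (Suc j)
    have "zz x (Suc j) = zz x j" using X_chg[OF x nm] .
    then show ?case using Suc by simp
  qed
  have bj: "bb x j = 0" for j using X_b01[OF x, of j] nm[of j] by auto
  show ?thesis
  proof (rule ext_bz)
    fix j
    show "bb x j = bb (ee (zz x 0)) j" using bj[of j] by simp
    show "zz x j = zz (ee (zz x 0)) j" using zj[of j] by simp
  qed
qed

lemma compact_X: "compact X" using compact_XX[OF cZ] .

lemma min_ee:
  assumes "z \<in> Z'"
  shows "minimal_set X TT {ee z}"
proof -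
  have "\<not> (\<exists>K'. K' \<noteq> {} \<and> closed K' \<and> K' \<subset> {ee z} \<and> TT ` K' \<subseteq> K')"
    by (metis psubset_eq subset_singletonD)
  moreover have "TT ` {ee z} = {ee z}" by (simp add: TT_ee)
  ultimately show ?thesis unfolding minimal_set_def using ee_X[OF assms] by simp
qed

lemma minimal_no_marks:
  assumes K: "minimal_set X TT K" and x: "x \<in> K"
  shows "bb x p \<noteq> 1"
proof
  assume xp: "bb x p = 1"
  have Kne: "K \<noteq> {}" and KX: "K \<subseteq> X" and Kc: "closed K" and KT: "TT ` K = K"
    and Kmin: "\<not> (\<exists>K'. K' \<noteq> {} \<and> closed K' \<and> K' \<subset> K \<and> TT ` K' \<subseteq> K')"
    using K unfolding minimal_set_def by blast+
  have Kpow: "(TT ^^ i) y \<in> K" if "y \<in> K" for i y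
    by (induction i) (use that KT in auto)
  define W where "W = {y::nat\<Rightarrow>real. y (prod_encode (0,0)) > 1/2}"
  have oW: "open W" unfolding W_def
    by (rule open_Collect_less[OF continuous_on_const continuous_on_product_coordinates])
  have xpW: "(TT ^^ p) x \<in> W" using xp unfolding W_def bb_def[symmetric] by simp
  have visit: "\<exists>i. (TT ^^ i) y \<in> W" if y: "y \<in> K" for y
  proof -
    define Orb where "Orb = {(TT ^^ i) y | i. True}"
    have OK: "Orb \<subseteq> K" unfolding Orb_def using Kpow y by blast
    have "closure Orb \<subseteq> K" using closure_minimal[OF OK Kc] .
    moreover have "closure Orb \<noteq> {}" unfolding Orb_def by (metis (mono_tags) closure_subset empty_iff mem_Collect_eq subset_empty)
    moreover have "TT ` closure Orb \<subseteq> closure Orb"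
    proof (rule image_closure_subset[OF cont_TT closed_closure])
      have "TT ` Orb \<subseteq> Orb" unfolding Orb_def
      proof
        fix u assume "u \<in> TT ` {(TT ^^ i) y |i. True}"
        then obtain i where "u = TT ((TT ^^ i) y)" by blast
        then have "u = (TT ^^ Suc i) y" by simp
        then show "u \<in> {(TT ^^ i) y |i. True}" by blast
      qed
      then show "TT ` Orb \<subseteq> closure Orb" using closure_subset by blast
    qed
    ultimately have "closure Orb = K" using Kmin closed_closure by blast
    then have "W \<inter> closure Orb \<noteq> {}" using xpW Kpow[OF x] by blast
    then have "W \<inter> Orb \<noteq> {}" using open_Int_closure_eq_empty[OF oW] by blast
    then show ?thesis unfolding Orb_def by blast
  qed
  have cK: "compact K"
  proof -
    have "compact (X \<inter> K)" using compact_Int_closed[OF compact_X Kc] .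
    moreover have "X \<inter> K = K" using KX by blast
    ultimately show ?thesis by simp
  qed
  have xX: "x \<in> X" using KX x by blast
  have cov: "K \<subseteq> (\<Union>i\<in>UNIV. (TT ^^ i) -` W)" using visit by blast
  have opn: "\<And>i. i \<in> UNIV \<Longrightarrow> open ((TT ^^ i) -` W)" by (rule open_vimage[OF oW cont_pow])
  obtain C where C: "C \<subseteq> UNIV" "finite C" "K \<subseteq> (\<Union>i\<in>C. (TT ^^ i) -` W)"
    by (rule compactE_image[OF cK opn cov])
  define m where "m = Suc (Max (insert 0 C))"
  have Cm: "i < m" if "i \<in> C" for i using C(2) that unfolding m_def by (simp add: le_imp_less_Suc)
  have win: "\<exists>i<m. bb x (i + t) = 1" for t
  proof -
    have "(TT ^^ t) x \<in> K" using Kpow[OF x] .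
    then obtain i where i: "i \<in> C" "(TT ^^ i) ((TT ^^ t) x) \<in> W" using C(3) by blast
    have "(TT ^^ i) ((TT ^^ t) x) = (TT ^^ (i + t)) x" by (simp add: funpow_add)
    then have "bb ((TT ^^ (i + t)) x) 0 > 1/2" using i(2) unfolding W_def bb_def by simp
    then have "bb x (i + t) > 1/2" by simp
    then have "bb x (i + t) = 1" using X_b01[OF xX, of "i + t"] by auto
    then show ?thesis using Cm[OF i(1)] by blast
  qed
  obtain i0 where i0: "i0 < m" "bb x (i0 + 0) = 1" using win[of 0] by blast
  obtain i1 where i1: "i1 < m" "bb x (i1 + (i0 + 0 + m + 1)) = 1" using win[of "i0 + 0 + m + 1"] by blast
  obtain i2 where i2: "i2 < m" "bb x (i2 + (i1 + (i0 + 0 + m + 1) + m + 1)) = 1"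
    using win[of "i1 + (i0 + 0 + m + 1) + m + 1"] by blast
  have lt1: "i0 + 0 < i1 + (i0 + 0 + m + 1)" by simp
  have lt2: "i1 + (i0 + 0 + m + 1) < i2 + (i1 + (i0 + 0 + m + 1) + m + 1)" by simp
  have "2*((i1 + (i0 + 0 + m + 1)) - (i0 + 0)) \<le> (i2 + (i1 + (i0 + 0 + m + 1) + m + 1)) - (i1 + (i0 + 0 + m + 1)) \<or>
        2*((i2 + (i1 + (i0 + 0 + m + 1) + m + 1)) - (i1 + (i0 + 0 + m + 1))) \<le> (i1 + (i0 + 0 + m + 1)) - (i0 + 0)"
    by (rule X_tri[OF xX lt1 lt2 i0(2) i1(2) i2(2)])
  then show False using i1(1) i2(1) by simp
qed

lemma minimal_points_eq: "minimal_points X TT = ee ` Z'"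
proof
  show "ee ` Z' \<subseteq> minimal_points X TT"
    unfolding minimal_points_def using min_ee by blast
  show "minimal_points X TT \<subseteq> ee ` Z'"
  proof
    fix x assume "x \<in> minimal_points X TT"
    then obtain K where K: "minimal_set X TT K" "x \<in> K" unfolding minimal_points_def by blast
    then have xX: "x \<in> X" unfolding minimal_set_def by blast
    have "x = ee (zz x 0)" using unmarked[OF xX] minimal_no_marks[OF K] by blast
    then show "x \<in> ee ` Z'" using X_z[OF xX, of 0] by blast
  qed
qed

lemma fixed: "\<forall>x\<in>minimal_points X TT. TT x = x"
  using minimal_points_eq TT_ee by auto

end

context SZ
begin

lemma opene_mark:
  assumes "z0 \<in> Z'"
  shows "opene X (X \<inter> {y. y (prod_encode (a,0)) > 1/2})"
proof -
  have o1: "open {y::nat\<Rightarrow>real. y (prod_encode (a,0)) > 1/2}"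
    by (rule open_Collect_less[OF continuous_on_const continuous_on_product_coordinates])
  have "mk (\<lambda>j. if j = a then 1 else 0) (\<lambda>_. z0) \<in> X \<inter> {y. y (prod_encode (a,0)) > 1/2}"
    using point_mark[OF assms, of a] by (simp add: bb_def[symmetric])
  then show ?thesis unfolding opene_def using o1 by blast
qed

lemma omega_sub: "F \<in> hitting_family X TT \<Longrightarrow> omega_N X TT x \<subseteq> closure {(TT ^^ i) x | i. i \<in> F}"
  unfolding omega_N_def by blast

lemma closed_XE: "closed {y. \<forall>j. bb y j = 0 \<or> even j}"
  by (intro closed_Collect_all closed_Collect_disj closed_Collect_eq cont_bb continuous_on_const closed_Collect_const)
lemma closed_XO: "closed {y. \<forall>j. bb y j = 0 \<or> odd j}"
  by (intro closed_Collect_all closed_Collect_disj closed_Collect_eq cont_bb continuous_on_const closed_Collect_const)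

lemma omega_upper:
  assumes x: "x \<in> X"
  shows "omega_N X TT x \<subseteq> ee ` Z'"
proof -
  obtain z0 where z0: "z0 \<in> Z'" using neZ by blast
  define U where "U = X \<inter> {y. y (prod_encode (0,0)) > 1/2}"
  define V where "V = X \<inter> {y. y (prod_encode (1,0)) > 1/2}"
  have oU: "opene X U" unfolding U_def by (rule opene_mark[OF z0])
  have oV: "opene X V" unfolding V_def by (rule opene_mark[OF z0])
  have bU: "y \<in> U \<Longrightarrow> bb y 0 = 1" for y using X_b01[of y 0] unfolding U_def bb_def by auto
  have bV: "y \<in> V \<Longrightarrow> bb y 1 = 1" for y using X_b01[of y 1] unfolding V_def bb_def by auto
  have UX: "U \<subseteq> X" unfolding U_def by blast
  have h1: "hitting_times TT U V \<subseteq> {n. odd n}"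
  proof
    fix n assume "n \<in> hitting_times TT U V"
    then obtain y where y: "y \<in> U" "(TT ^^ n) y \<in> V" unfolding hitting_times_def by blast
    have yX: "y \<in> X" using UX y(1) by blast
    have "bb y (1 + n) = 1" using bV[OF y(2)] by simp
    then have "even (0 + (1 + n))" by (rule X_par[OF yX bU[OF y(1)]])
    then show "n \<in> {n. odd n}" by simp
  qed
  have h2: "hitting_times TT U U \<subseteq> {n. even n}"
  proof
    fix n assume "n \<in> hitting_times TT U U"
    then obtain y where y: "y \<in> U" "(TT ^^ n) y \<in> U" unfolding hitting_times_def by blast
    have yX: "y \<in> X" using UX y(1) by blast
    have "bb y (0 + n) = 1" using bU[OF y(2)] by simp
    then have "even (0 + (0 + n))" by (rule X_par[OF yX bU[OF y(1)]])
    then show "n \<in> {n. even n}" by simp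
  qed
  have F1: "hitting_times TT U V \<in> hitting_family X TT" unfolding hitting_family_def using oU oV by blast
  have F2: "hitting_times TT U U \<in> hitting_family X TT" unfolding hitting_family_def using oU by blast
  have om: "omega_N X TT x \<subseteq> closure {(TT ^^ i) x | i. odd i} \<inter> closure {(TT ^^ i) x | i. even i}"
  proof -
    have "closure {(TT ^^ i) x | i. i \<in> hitting_times TT U V} \<subseteq> closure {(TT ^^ i) x | i. odd i}"
      by (rule closure_mono) (use h1 in blast)
    moreover have "closure {(TT ^^ i) x | i. i \<in> hitting_times TT U U} \<subseteq> closure {(TT ^^ i) x | i. even i}"
      by (rule closure_mono) (use h2 in blast)
    ultimately show ?thesis using omega_sub[OF F1, of x] omega_sub[OF F2, of x] by blast
  qed
  define XE where "XE = {y. \<forall>j. bb y j = 0 \<or> even j}"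
  define XO where "XO = {y. \<forall>j. bb y j = 0 \<or> odd j}"
  have cXE: "closed XE" unfolding XE_def by (rule closed_XE)
  have cXO: "closed XO" unfolding XO_def by (rule closed_XO)
  have both: "X \<inter> XE \<inter> XO \<subseteq> ee ` Z'"
  proof
    fix y assume y: "y \<in> X \<inter> XE \<inter> XO"
    then have yX: "y \<in> X" by blast
    have "bb y j \<noteq> 1" for j
    proof -
      have "bb y j = 0 \<or> even j" "bb y j = 0 \<or> odd j" using y unfolding XE_def XO_def by blast+
      then show ?thesis by auto
    qed
    then have "y = ee (zz y 0)" using unmarked[OF yX] by blast
    then show "y \<in> ee ` Z'" using X_z[OF yX] by blast
  qed
  have iterX: "closure {(TT ^^ i) x | i. P i} \<subseteq> X" for P
  proof -
    have "{(TT ^^ i) x | i. P i} \<subseteq> X" using TT_pow_X[OF x] by blast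
    then show ?thesis by (rule closure_minimal[OF _ closed_XX[OF compact_imp_closed[OF cZ]]])
  qed
  show ?thesis
  proof (cases "\<exists>j. bb x j = 1 \<and> odd j")
    case True
    then obtain j0 where j0: "bb x j0 = 1" "odd j0" by blast
    have allodd: "bb x j = 0 \<or> odd j" for j
    proof (cases "bb x j = 1")
      case True then have "even (j0 + j)" using X_par[OF x j0(1)] by blast
      then have "odd j" using j0(2) by presburger
      then show ?thesis by simp
    next
      case False then show ?thesis using X_b01[OF x, of j] by blast
    qed
    have "{(TT ^^ i) x | i. odd i} \<subseteq> XE"
    proof
      fix y assume "y \<in> {(TT ^^ i) x | i. odd i}"
      then obtain i where i: "odd i" "y = (TT ^^ i) x" by blast
      have "bb y j = 0 \<or> even j" for j
      proof -
        have "odd (j + i) \<Longrightarrow> even j" using i(1) by presburger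
        then show ?thesis using allodd[of "j + i"] i(2) by auto
      qed
      then show "y \<in> XE" unfolding XE_def by blast
    qed
    then have c1: "closure {(TT ^^ i) x | i. odd i} \<subseteq> XE" using closure_minimal cXE by blast
    have "{(TT ^^ i) x | i. even i} \<subseteq> XO"
    proof
      fix y assume "y \<in> {(TT ^^ i) x | i. even i}"
      then obtain i where i: "even i" "y = (TT ^^ i) x" by blast
      have "bb y j = 0 \<or> odd j" for j
      proof -
        have "odd (j + i) \<Longrightarrow> odd j" using i(1) by presburger
        then show ?thesis using allodd[of "j + i"] i(2) by auto
      qed
      then show "y \<in> XO" unfolding XO_def by blast
    qed
    then have c2: "closure {(TT ^^ i) x | i. even i} \<subseteq> XO" using closure_minimal cXO by blast
    show ?thesis using om c1 c2 iterX both by blast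
  next
    case False
    have alleven: "bb x j = 0 \<or> even j" for j using False X_b01[OF x, of j] by blast
    have "{(TT ^^ i) x | i. odd i} \<subseteq> XO"
    proof
      fix y assume "y \<in> {(TT ^^ i) x | i. odd i}"
      then obtain i where i: "odd i" "y = (TT ^^ i) x" by blast
      have "bb y j = 0 \<or> odd j" for j
      proof -
        have "even (j + i) \<Longrightarrow> odd j" using i(1) by presburger
        then show ?thesis using alleven[of "j + i"] i(2) by auto
      qed
      then show "y \<in> XO" unfolding XO_def by blast
    qed
    then have c1: "closure {(TT ^^ i) x | i. odd i} \<subseteq> XO" using closure_minimal cXO by blast
    have "{(TT ^^ i) x | i. even i} \<subseteq> XE"
    proof
      fix y assume "y \<in> {(TT ^^ i) x | i. even i}"
      then obtain i where i: "even i" "y = (TT ^^ i) x" by blast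
      have "bb y j = 0 \<or> even j" for j
      proof -
        have "even (j + i) \<Longrightarrow> even j" using i(1) by presburger
        then show ?thesis using alleven[of "j + i"] i(2) by auto
      qed
      then show "y \<in> XE" unfolding XE_def by blast
    qed
    then have c2: "closure {(TT ^^ i) x | i. even i} \<subseteq> XE" using closure_minimal cXE by blast
    show ?thesis using om c1 c2 iterX both by blast
  qed
qed

lemma double_visit:
  assumes iik: "\<And>k. k \<le> ii k"
    and l1: "(\<lambda>k. (TT ^^ ii k) x) \<longlonglongrightarrow> p"
    and l2: "(\<lambda>k. (TT ^^ Suc (ii k)) x) \<longlonglongrightarrow> p"
  shows "p \<in> omega_N X TT x"
  unfolding omega_N_def
proof
  fix F assume "F \<in> hitting_family X TT"
  then obtain U V where UV: "opene X U" "opene X V" "hitting_times TT U V \<subseteq> F"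
    unfolding hitting_family_def by blast
  obtain r n0 where r: "r < 2" "\<And>n. n \<ge> n0 \<Longrightarrow> n mod 2 = r \<Longrightarrow> n \<in> hitting_times TT U V"
    using hit[OF UV(1,2)] by blast
  show "p \<in> closure {(TT ^^ i) x | i. i \<in> F}"
    unfolding closure_approachable
  proof (intro allI impI)
    fix e :: real assume e: "e > 0"
    have ev1: "eventually (\<lambda>k. dist ((TT ^^ ii k) x) p < e) sequentially" using tendstoD[OF l1 e] .
    have ev2: "eventually (\<lambda>k. dist ((TT ^^ Suc (ii k)) x) p < e) sequentially" using tendstoD[OF l2 e] .
    have ev3: "eventually (\<lambda>k. n0 \<le> k) sequentially" by (rule eventually_ge_at_top)
    have "eventually (\<lambda>k. dist ((TT ^^ ii k) x) p < e \<and> dist ((TT ^^ Suc (ii k)) x) p < e \<and> n0 \<le> k) sequentially"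
      by (intro eventually_conj ev1 ev2 ev3)
    then obtain N where N: "\<forall>k\<ge>N. dist ((TT ^^ ii k) x) p < e \<and> dist ((TT ^^ Suc (ii k)) x) p < e \<and> n0 \<le> k"
      unfolding eventually_sequentially by blast
    define k where "k = N"
    have k: "dist ((TT ^^ ii k) x) p < e" "dist ((TT ^^ Suc (ii k)) x) p < e" "n0 \<le> k"
      using N unfolding k_def by blast+
    have nk: "n0 \<le> ii k" using k(3) iik[of k] by linarith
    show "\<exists>y\<in>{(TT ^^ i) x | i. i \<in> F}. dist y p < e"
    proof (cases "ii k mod 2 = r")
      case True
      then have "ii k \<in> F" using r(2)[OF nk] UV(3) by blast
      then show ?thesis using k(1) by blast
    next
      case False
      then have "Suc (ii k) mod 2 = r" using r(1) by presburger
      then have "Suc (ii k) \<in> F" using r(2)[of "Suc (ii k)"] nk UV(3) by auto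
      then show ?thesis using k(2) by blast
    qed
  qed
qed

end

context SZ
begin

lemma no_synd:
  assumes x: "x \<in> X" and w: "\<And>t. t \<ge> t0 \<Longrightarrow> \<exists>i<m. bb x (i + t) = 1"
  shows False
proof -
  obtain i0 where i0: "i0 < m" "bb x (i0 + t0) = 1" using w[of t0] by blast
  define a0 where "a0 = i0 + t0"
  obtain i1 where i1: "i1 < m" "bb x (i1 + (a0 + m + 1)) = 1" using w[of "a0 + m + 1"] unfolding a0_def by auto
  define a1 where "a1 = i1 + (a0 + m + 1)"
  obtain i2 where i2: "i2 < m" "bb x (i2 + (a1 + m + 1)) = 1" using w[of "a1 + m + 1"] unfolding a1_def a0_def by auto
  define a2 where "a2 = i2 + (a1 + m + 1)"
  have lt1: "a0 < a1" and lt2: "a1 < a2" unfolding a1_def a2_def by simp_all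
  have m0: "bb x a0 = 1" "bb x a1 = 1" "bb x a2 = 1" using i0 i1 i2 unfolding a0_def a1_def a2_def by simp_all
  have "2*(a1 - a0) \<le> a2 - a1 \<or> 2*(a2 - a1) \<le> a1 - a0"
    by (rule X_tri[OF x lt1 lt2 m0])
  moreover have "a1 - a0 = i1 + m + 1" "a2 - a1 = i2 + m + 1" unfolding a1_def a2_def by simp_all
  ultimately show False using i1(1) i2(1) by simp
qed

lemma free_window:
  assumes x: "x \<in> X"
  shows "\<exists>t\<ge>t0. \<forall>j<L. bb x (t + j) \<noteq> 1"
proof (rule ccontr)
  assume "\<not> ?thesis"
  then have "\<And>t. t \<ge> t0 \<Longrightarrow> \<exists>i<L. bb x (i + t) = 1" by (auto simp: add.commute)
  then show False using no_synd[OF x] by blast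
qed

lemma window_conv:
  assumes bw: "\<And>k j. j < L k \<Longrightarrow> bb x (s k + j) = 0 \<and> zz x (s k + j) = w k"
    and Lev: "\<And>j. eventually (\<lambda>k. j < L k) sequentially"
    and wl: "w \<longlonglongrightarrow> l"
  shows "(\<lambda>k. (TT ^^ s k) x) \<longlonglongrightarrow> ee l"
  unfolding tendsto_fun_iff
proof
  fix n
  define j where "j = fst (prod_decode n)"
  have "(\<lambda>k. ee (w k)) \<longlonglongrightarrow> ee l"
    by (rule continuous_on_tendsto_compose[OF cont_ee[of UNIV] wl]) auto
  then have c: "(\<lambda>k. ee (w k) n) \<longlonglongrightarrow> ee l n" unfolding tendsto_fun_iff by blast
  have "eventually (\<lambda>k. ee (w k) n = (TT ^^ s k) x n) sequentially"
    using Lev[of j]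
  proof (rule eventually_mono)
    fix k assume "j < L k"
    then have "bb ((TT ^^ s k) x) j = bb (ee (w k)) j" "zz ((TT ^^ s k) x) j = zz (ee (w k)) j"
      using bw[of j k] by (simp_all add: add.commute)
    then show "ee (w k) n = (TT ^^ s k) x n" using coord_eq unfolding j_def by metis
  qed
  then show "(\<lambda>k. (TT ^^ s k) x n) \<longlonglongrightarrow> ee l n" by (rule Lim_transform_eventually[OF c])
qed

lemma tc: "x \<in> X \<Longrightarrow> omega_N X TT x \<noteq> {}"
proof -
  assume x: "x \<in> X"
  have "\<forall>k. \<exists>t. t \<ge> k \<and> (\<forall>j<k+2. bb x (t + j) \<noteq> 1)" using free_window[OF x] by blast
  then obtain tt where tt: "\<And>k. tt k \<ge> k" "\<And>k j. j < k + 2 \<Longrightarrow> bb x (tt k + j) \<noteq> 1" by metis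
  have const: "j \<le> k + 2 \<Longrightarrow> zz x (tt k + j) = zz x (tt k)" for k j
  proof (induction j)
    case 0 then show ?case by simp
  next
    case (Suc j)
    then have jk: "j < k + 2" by simp
    have "zz x (Suc (tt k + j)) = zz x (tt k + j)" using X_chg[OF x tt(2)[OF jk]] .
    then show ?case using Suc jk by simp
  qed
  define \<zeta> where "\<zeta> k = zz x (tt k)" for k
  have zZ: "\<forall>k. \<zeta> k \<in> Z'" unfolding \<zeta>_def using X_z[OF x] by blast
  obtain l r where lr: "l \<in> Z'" "strict_mono r" "(\<zeta> \<circ> r) \<longlonglongrightarrow> l"
    using seq_compactE[OF compact_imp_seq_compact[OF cZ] zZ] by blast
  have bz: "bb x (tt k + j) = 0 \<and> zz x (tt k + j) = \<zeta> k" if "j < k + 2" for k j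
    using tt(2)[OF that] X_b01[OF x, of "tt k + j"] const[of j k] that unfolding \<zeta>_def by auto
  have rk: "k \<le> r k" for k using seq_suble[OF lr(2)] .
  have c1: "(\<lambda>k. (TT ^^ tt (r k)) x) \<longlonglongrightarrow> ee l"
  proof (rule window_conv[where L="\<lambda>k. r k + 2" and w="\<zeta> \<circ> r"])
    show "bb x (tt (r k) + j) = 0 \<and> zz x (tt (r k) + j) = (\<zeta> \<circ> r) k" if "j < r k + 2" for k j
      using bz[OF that] by simp
    show "eventually (\<lambda>k. j < r k + 2) sequentially" for j
      unfolding eventually_sequentially
    proof (intro exI[of _ j] allI impI)
      fix k assume "j \<le> k" then show "j < r k + 2" using rk[of k] by linarith
    qed
    show "(\<zeta> \<circ> r) \<longlonglongrightarrow> l" by (rule lr(3))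
  qed
  have c2: "(\<lambda>k. (TT ^^ Suc (tt (r k))) x) \<longlonglongrightarrow> ee l"
  proof (rule window_conv[where L="\<lambda>k. r k + 1" and w="\<zeta> \<circ> r"])
    show "bb x (Suc (tt (r k)) + j) = 0 \<and> zz x (Suc (tt (r k)) + j) = (\<zeta> \<circ> r) k" if "j < r k + 1" for k j
      using bz[of "Suc j" "r k"] that by simp
    show "eventually (\<lambda>k. j < r k + 1) sequentially" for j
      unfolding eventually_sequentially
    proof (intro exI[of _ j] allI impI)
      fix k assume "j \<le> k" then show "j < r k + 1" using rk[of k] by linarith
    qed
    show "(\<zeta> \<circ> r) \<longlonglongrightarrow> l" by (rule lr(3))
  qed
  have "ee l \<in> omega_N X TT x"
    by (rule double_visit[OF _ c1 c2]) (use rk tt(1) le_trans in blast)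
  then show ?thesis by blast
qed

end

definition lev :: "nat \<Rightarrow> nat" where
  "lev j = (LEAST k. j < 4 ^ Suc k)"

lemma lt_4pow: "n < (4::nat) ^ n"
proof -
  have "(2::nat) ^ n \<le> 4 ^ n" by (rule power_mono) simp_all
  then show ?thesis using less_exp[of n] by linarith
qed

lemma lev_eq:
  assumes "k = 0 \<or> 4 ^ k \<le> j" "j < 4 ^ Suc k"
  shows "lev j = k"
  unfolding lev_def
proof (rule Least_equality)
  show "j < 4 ^ Suc k" by (rule assms(2))
  show "k \<le> y" if "j < 4 ^ Suc y" for y
  proof (rule ccontr)
    assume "\<not> k \<le> y"
    then have "Suc y \<le> k" by simp
    then have "(4::nat) ^ Suc y \<le> 4 ^ k" by (rule power_increasing) simp
    moreover have "4 ^ k \<le> j" using assms(1) \<open>\<not> k \<le> y\<close> by auto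
    ultimately show False using that by linarith
  qed
qed

lemma lev_props: "j < 4 ^ Suc (lev j)" "lev j = 0 \<or> 4 ^ lev j \<le> j"
proof -
  have ex: "\<exists>k. j < (4::nat) ^ Suc k"
  proof
    show "j < 4 ^ Suc j" using lt_4pow[of "Suc j"] by simp
  qed
  show "j < 4 ^ Suc (lev j)" unfolding lev_def by (rule LeastI_ex[OF ex])
  show "lev j = 0 \<or> 4 ^ lev j \<le> j"
  proof (cases "lev j")
    case 0 then show ?thesis by simp
  next
    case (Suc k)
    have "k < lev j" using Suc by simp
    then have "\<not> j < 4 ^ Suc k" unfolding lev_def by (rule not_less_Least)
    then show ?thesis using Suc by simp
  qed
qed

definition isM :: "nat \<Rightarrow> bool" where
  "isM j \<longleftrightarrow> (\<exists>k. Suc j = 4 ^ Suc k)"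

definition xq :: "(nat \<Rightarrow> nat \<Rightarrow> real) \<Rightarrow> (nat \<Rightarrow> real)" where
  "xq q = mk (\<lambda>j. if isM j then 1 else 0) (\<lambda>j. q (fst (prod_decode (lev j))))"

lemma lev_Suc: "\<not> isM j \<Longrightarrow> lev (Suc j) = lev j"
proof -
  assume nm: "\<not> isM j"
  define k where "k = lev j"
  have a: "j < 4 ^ Suc k" "k = 0 \<or> 4 ^ k \<le> j" using lev_props[of j] unfolding k_def by auto
  have "Suc j \<noteq> 4 ^ Suc k" using nm unfolding isM_def by blast
  then have "Suc j < 4 ^ Suc k" using a(1) by linarith
  moreover have "k = 0 \<or> 4 ^ k \<le> Suc j" using a(2) by auto
  ultimately show ?thesis using lev_eq k_def by metis
qed

lemma window_lev:
  assumes "0 < K" "4 ^ K \<le> p" "p + 2 \<le> 4 ^ Suc K"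
  shows "\<not> isM p \<and> lev p = K"
proof
  show "lev p = K" by (rule lev_eq) (use assms in auto)
  show "\<not> isM p"
  proof
    assume "isM p"
    then obtain a where a: "Suc p = 4 ^ Suc a" unfolding isM_def by blast
    have four: "1 < (4::nat)" by simp
    have "(4::nat) ^ K < 4 ^ Suc a" using a assms(2) by linarith
    then have "K < Suc a" using power_strict_increasing_iff[OF four, of K "Suc a"] by blast
    have "(4::nat) ^ Suc a < 4 ^ Suc K" using a assms(3) by linarith
    then have "Suc a < Suc K" using power_strict_increasing_iff[OF four, of "Suc a" "Suc K"] by blast
    then show False using \<open>K < Suc a\<close> by simp
  qed
qed

context SZ
begin

lemma xq_X:
  assumes q: "range q \<subseteq> Z'"
  shows "xq q \<in> X"
proof (rule X_intro)
  show "bb (xq q) j = 0 \<or> bb (xq q) j = 1" for j by (simp add: xq_def)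
  show "zz (xq q) j \<in> Z'" for j using q by (auto simp: xq_def)
  show "zz (xq q) (Suc j) = zz (xq q) j" if "bb (xq q) j \<noteq> 1" for j
  proof -
    have "\<not> isM j" using that by (simp add: xq_def split: if_splits)
    then show ?thesis by (simp add: xq_def lev_Suc)
  qed
  show "even (i + j)" if "bb (xq q) i = 1" "bb (xq q) j = 1" for i j
  proof -
    have "isM i" "isM j" using that by (simp_all add: xq_def split: if_splits)
    then obtain a b where "Suc i = 4 ^ Suc a" "Suc j = 4 ^ Suc b"
      unfolding isM_def by blast
    then have "even (Suc i)" "even (Suc j)" by simp_all
    then show ?thesis by presburger
  qed
  show "2*(j-i) \<le> k-j \<or> 2*(k-j) \<le> j-i"
    if ij: "i < j" "j < k" and m: "bb (xq q) i = 1" "bb (xq q) j = 1" "bb (xq q) k = 1" for i j k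
  proof -
    have "isM j" "isM k" using m(2,3) by (simp_all add: xq_def split: if_splits)
    then obtain b c where bc: "Suc j = 4 ^ Suc b" "Suc k = 4 ^ Suc c"
      unfolding isM_def by blast
    have four: "1 < (4::nat)" by simp
    have "(4::nat) ^ Suc b < 4 ^ Suc c" using bc ij by linarith
    then have "Suc b < Suc c" using power_strict_increasing_iff[OF four, of "Suc b" "Suc c"] by blast
    then have "(4::nat) ^ Suc (Suc b) \<le> 4 ^ Suc c" by (intro power_increasing) simp_all
    then have "4 * 4 ^ Suc b \<le> Suc k" using bc by simp
    then have "4 * Suc j \<le> Suc k" using bc by simp
    then have h4: "4*j + 4 \<le> k + 1" by simp
    have "k - j + j = k" "j - i + i = j" using ij by auto
    then have "2*(j-i) \<le> k-j" using ij h4 by linarith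
    then show ?thesis by blast
  qed
qed

lemma xq_visit:
  assumes q: "range q \<subseteq> Z'"
  shows "ee (q n) \<in> omega_N X TT (xq q)"
proof -
  define K where "K t = prod_encode (n, Suc t)" for t
  have K1: "0 < K t" "t < K t" for t
    using le_prod_encode_2[of "Suc t" n] unfolding K_def by simp_all
  have Kn: "fst (prod_decode (K t)) = n" for t unfolding K_def by simp
  have K4: "t < 4 ^ K t" for t using K1(2)[of t] lt_4pow[of "K t"] by linarith
  have win: "bb (xq q) p = 0 \<and> zz (xq q) p = q n" if "4 ^ K t \<le> p" "p + 2 \<le> 4 ^ Suc (K t)" for t p
    using window_lev[OF K1(1) that] Kn by (simp add: xq_def)
  have c1: "(\<lambda>t. (TT ^^ (4 ^ K t)) (xq q)) \<longlonglongrightarrow> ee (q n)"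
  proof (rule window_conv[where L="\<lambda>t. 3 * 4 ^ K t - (1::nat)" and w="\<lambda>_. q n"])
    show "bb (xq q) (4 ^ K t + j) = 0 \<and> zz (xq q) (4 ^ K t + j) = q n" if "j < 3 * 4 ^ K t - 1" for t j
      by (rule win[of t]) (use that in auto)
    show "eventually (\<lambda>t. j < 3 * 4 ^ K t - (1::nat)) sequentially" for j :: nat
      unfolding eventually_sequentially
    proof (intro exI[of _ j] allI impI)
      fix t assume "j \<le> t" then show "j < 3 * 4 ^ K t - 1" using K4[of t] by linarith
    qed
  qed simp
  have c2: "(\<lambda>t. (TT ^^ Suc (4 ^ K t)) (xq q)) \<longlonglongrightarrow> ee (q n)"
  proof (rule window_conv[where L="\<lambda>t. 3 * 4 ^ K t - (2::nat)" and w="\<lambda>_. q n"])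
    show "bb (xq q) (Suc (4 ^ K t) + j) = 0 \<and> zz (xq q) (Suc (4 ^ K t) + j) = q n" if "j < 3 * 4 ^ K t - 2" for t j
      by (rule win[of t]) (use that in auto)
    show "eventually (\<lambda>t. j < 3 * 4 ^ K t - (2::nat)) sequentially" for j :: nat
      unfolding eventually_sequentially
    proof (intro exI[of _ "Suc j"] allI impI)
      fix t assume "Suc j \<le> t" then show "j < 3 * 4 ^ K t - 2" using K4[of t] by linarith
    qed
  qed simp
  show ?thesis
    by (rule double_visit[OF _ c1 c2]) (use K4 in \<open>simp add: less_imp_le\<close>)
qed

lemma closed_omega: "closed (omega_N X TT x)"
  unfolding omega_N_def by (intro closed_INT ballI closed_closure)

lemma xq_omega:
  assumes q: "range q \<subseteq> Z'" "Z' \<subseteq> closure (range q)"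
  shows "minimal_points X TT = omega_N X TT (xq q)"
proof
  show "omega_N X TT (xq q) \<subseteq> minimal_points X TT"
    using omega_upper[OF xq_X[OF q(1)]] minimal_points_eq by simp
  have "ee ` range q \<subseteq> omega_N X TT (xq q)" using xq_visit[OF q(1)] by blast
  then have "ee ` closure (range q) \<subseteq> omega_N X TT (xq q)"
    by (rule image_closure_subset[OF cont_ee closed_omega])
  then show "minimal_points X TT \<subseteq> omega_N X TT (xq q)"
    using minimal_points_eq q(2) by blast
qed

lemma perfect: "x \<in> X \<Longrightarrow> x islimpt X"
proof -
  assume x: "x \<in> X"
  show "x islimpt X" unfolding islimpt_def
  proof (intro allI impI)
    fix W assume W: "x \<in> W" "open W"
    obtain K where K: "\<And>y. (\<forall>j<K. bb y j = bb x j \<and> zz y j = zz x j) \<Longrightarrow> y \<in> W"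
      using open_nbhd[OF W(2,1)] by blast
    define N where "N = Suc K"
    obtain c where c: "3*N \<le> c" "\<And>j. j < N \<Longrightarrow> bb x j = 1 \<Longrightarrow> even (c + j)"
    proof (cases "\<exists>j0<N. bb x j0 = 1")
      case True
      then obtain j0 where j0: "bb x j0 = 1" by blast
      define c where "c = 3*N + (3*N + j0) mod 2"
      have "even (c + j)" if "bb x j = 1" for j
      proof -
        have "even (j0 + j)" using X_par[OF x j0 that] .
        then show ?thesis unfolding c_def by presburger
      qed
      then show ?thesis using that[of c] unfolding c_def by simp
    next
      case False
      then show ?thesis using that[of "3*N"] by auto
    qed
    define n where "n = 6 * (c + 2 + N)"
    have y1X: "glue x N c n x \<in> X"
    proof (rule glue_X[OF x x])
      show "\<And>j. j < N \<Longrightarrow> bb x j = 1 \<Longrightarrow> even (n + j + c)"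
      proof -
        fix j assume "j < N" "bb x j = 1"
        then have "even (c + j)" using c(2) by blast
        then show "even (n + j + c)" unfolding n_def by presburger
      qed
    qed (use c n_def N_def in auto)
    have y2X: "glue x N (c+2) n x \<in> X"
    proof (rule glue_X[OF x x])
      show "\<And>j. j < N \<Longrightarrow> bb x j = 1 \<Longrightarrow> even (c + 2 + j)"
      proof -
        fix j assume "j < N" "bb x j = 1"
        then have "even (c + j)" using c(2) by blast
        then show "even (c + 2 + j)" by presburger
      qed
      show "\<And>j. j < N \<Longrightarrow> bb x j = 1 \<Longrightarrow> even (n + j + (c + 2))"
      proof -
        fix j assume "j < N" "bb x j = 1"
        then have "even (c + j)" using c(2) by blast
        then show "even (n + j + (c + 2))" unfolding n_def by presburger
      qed
    qed (use c n_def N_def in auto)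
    have in1: "glue x N c n x \<in> W" by (rule K) (use glue_pre N_def in auto)
    have in2: "glue x N (c+2) n x \<in> W" by (rule K) (use glue_pre N_def in auto)
    have b1: "bb (glue x N c n x) c = 1" using c(1) unfolding N_def by (simp add: glue_def)
    have b2: "bb (glue x N (c+2) n x) c = 0" using c(1) unfolding N_def n_def by (simp add: glue_def)
    have "glue x N c n x \<noteq> glue x N (c+2) n x" using b1 b2 by auto
    then show "\<exists>y\<in>X. y \<in> W \<and> y \<noteq> x" using y1X y2X in1 in2 by metis
  qed
qed

end

theorem theorem6p4:
  fixes Z :: "'a::metric_space set"
  assumes "compact Z" and "Z \<noteq> {}"
  shows "\<exists>(X :: (nat \<Rightarrow> real) set) T.
           dynsys X T \<and> transitive_compact X T \<and> \<not> totally_transitive X T \<and>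
           minimal_points X T homeomorphic Z \<and>
           (\<forall>x\<in>minimal_points X T. T x = x) \<and>
           (\<exists>x\<in>X. minimal_points X T = omega_N X T x)"
proof -
  obtain Z' :: "(nat \<Rightarrow> real) set" and q :: "nat \<Rightarrow> nat \<Rightarrow> real" where
    Zq: "compact Z'" "Z' homeomorphic Z" "range q \<subseteq> Z'" "Z' \<subseteq> closure (range q)"
    using embed_compact[OF assms] by blast
  have ne: "Z' \<noteq> {}" using Zq(3) by blast
  interpret S: SZ Z' by (unfold_locales) (use Zq(1) ne in auto)
  obtain z0 where z0: "z0 \<in> Z'" using ne by blast
  have two: "\<exists>x\<in>XX Z'. \<exists>y\<in>XX Z'. x \<noteq> y"
  proof -
    have a: "ee z0 \<in> XX Z'" by (rule S.ee_X[OF z0])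
    have b: "mk (\<lambda>j. if j = 0 then 1 else 0) (\<lambda>_. z0) \<in> XX Z'" by (rule S.point_mark[OF z0])
    have "bb (ee z0) 0 \<noteq> bb (mk (\<lambda>j. if j = 0 then 1 else 0) (\<lambda>_. z0)) 0" by simp
    then have "ee z0 \<noteq> mk (\<lambda>j. if j = 0 then 1 else 0) (\<lambda>_. z0)" by metis
    then show ?thesis using a b by blast
  qed
  have dyn: "dynsys (XX Z') TT"
    unfolding dynsys_def using S.compact_X two S.perfect cont_TT S.TT_surj by blast
  have tcomp: "transitive_compact (XX Z') TT"
    unfolding transitive_compact_def using S.tc by blast
  have hm: "minimal_points (XX Z') TT homeomorphic Z"
  proof -
    have "Z' homeomorphic ee ` Z'"
      by (rule homeomorphic_compact[OF Zq(1) cont_ee refl]) (use inj_ee in \<open>simp add: inj_on_def inj_def\<close>)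
    then have "ee ` Z' homeomorphic Z'" using homeomorphic_sym by blast
    then show ?thesis using S.minimal_points_eq homeomorphic_trans[OF _ Zq(2)] by simp
  qed
  have om: "\<exists>x\<in>XX Z'. minimal_points (XX Z') TT = omega_N (XX Z') TT x"
    using S.xq_X[OF Zq(3)] S.xq_omega[OF Zq(3,4)] by blast
  show ?thesis
    using dyn tcomp S.not_tt hm S.fixed om by blast
qed

end
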